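(* Let $\lambda = a + i b$ be a complex eigenvalue (i.e. $b \neq 0$) of $\mathcal{A}\mathcal{P}^{-1}$, with $a$ the real part, $b$ the imaginary part, $i$ the imaginary unit, and $(x; y; z)$ the corresponding eigenvector of the equivalent scaled eigenproblem described in the context. Then, if $0\leq\gamma_{\min}^D<1$, any complex eigenvalue is such that \[ |\lambda-1| \le \sqrt{ 1 - \rho_{\min}}, \qquad \text{where} \quad \rho_{\min} = \frac{\gamma^A_{\min}\|x\|^2 + \gamma_{\min}^D \|y\|^2 + \gamma_{\min}^E \|z\|^2} {\|y\|^2 +\gamma^E_{\min}\|z\|^2}, \] otherwise (if $\gamma_{\min}^D \ge 1$), all eigenvalues are real.
   Context: Consider the double saddle-point matrix $\mathcal{A}=\begin{bmatrix} A & B^{T} & 0\\ B & -D & C^{T}\\ 0 & C & E\end{bmatrix}$ of size $n+m+p$, $n\ge\max\{m,p\}$, where $A\in\mathbb{R}^{n\times n}$ and $E\in\mathbb{R}^{p\times p}$ are symmetric positive definite (SPD), $B\in\mathbb{R}^{m\times n}$ has full row rank, $C\in\mathbb{R}^{p\times m}$ has full rank, and $D\in\mathbb{R}^{m\times m}$ is symmetric positive semidefinite. Let $S=D+BA^{-1}B^T$, $X=E+CS^{-1}C^T$, and let $\widehat A,\widehat S,\widehat X$ be SPD approximations of $A,S,X$. The block triangular preconditioner is $\mathcal{P}=\begin{bmatrix} \widehat A & B^{T} & 0\\ 0 & -\widehat S & C^{T}\\ 0 & 0 & \widehat X\end{bmatrix}$, and $\mathcal{P}_D=\mathrm{blkdiag}(\widehat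 A,\widehat S,\widehat X)$. Set $\widetilde S = D + B\widehat A^{-1}B^T$, $\widetilde X = E + C\widehat S^{-1}C^T$, $\overline A=\widehat A^{-1/2}A\widehat A^{-1/2}$, $\overline D=\widehat S^{-1/2}D\widehat S^{-1/2}$, $\overline E=\widehat X^{-1/2}E\widehat X^{-1/2}$, $R=\widehat S^{-1/2}B\widehat A^{-1/2}$, $K=\widehat X^{-1/2}C\widehat S^{-1/2}$. The eigenvalues of $\mathcal{A}\mathcal{P}^{-1}$ are those of the generalized problem $\mathcal{P}_D^{-1/2}\mathcal{A}\mathcal{P}_D^{-1/2}w=\lambda\mathcal{P}_D^{-1/2}\mathcal{P}\mathcal{P}_D^{-1/2}w$, i.e. $\overline A x - \lambda x = (\lambda-1)R^T y$, $Rx - \overline D y - (\lambda-1)K^T z = -\lambda y$, $Ky + \overline E z = \lambda z$, with $w=(x;y;z)$. Define $\gamma^A_{\min}=\lambda_{\min}(\widehat A^{-1}A)$ (with $\gamma_{\max}^A$ analogous), $\gamma^D_{\min}=\lambda_{\min}(\widehat S^{-1}D)\ge 0$, $\gamma^E_{\min}=\lambda_{\min}(\widehat X^{-1}E)>0$. It is assumed that $1\in[\gamma^A_{\min},\gamma^A_{\max}]$. *)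

theory Defs
  imports "HOL-Analysis.Analysis"
begin

definition spd :: "real^'n^'n \<Rightarrow> bool" where
  "spd M \<longleftrightarrow> transpose M = M \<and> (\<forall>v. v \<noteq> 0 \<longrightarrow> v \<bullet> (M *v v) > 0)"

definition spsd :: "real^'n^'n \<Rightarrow> bool" where
  "spsd M \<longleftrightarrow> transpose M = M \<and> (\<forall>v. v \<bullet> (M *v v) \<ge> 0)"

definition real_eigs :: "real^'n^'n \<Rightarrow> real set" where
  "real_eigs M = {\<mu>. \<exists>v. v \<noteq> 0 \<and> M *v v = \<mu> *\<^sub>R v}"

definition gamma_min :: "real^'n^'n \<Rightarrow> real^'n^'n \<Rightarrow> real" where
  "gamma_min Mhat M = Min (real_eigs (matrix_inv Mhat ** M))"

definition gamma_max :: "real^'n^'n \<Rightarrow> real^'n^'n \<Rightarrow> real" where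
  "gamma_max Mhat M = Max (real_eigs (matrix_inv Mhat ** M))"

definition cmat :: "real^'n^'m \<Rightarrow> complex^'n^'m" where
  "cmat M = (\<chi> i j. complex_of_real (M $ i $ j))"

text \<open>Hermitian quadratic form v^H M v of a real symmetric matrix (real part).
  For SPD Mhat this equals the squared Euclidean norm of Mhat^{1/2} v.\<close>
definition hqf :: "real^'n^'n \<Rightarrow> complex^'n \<Rightarrow> real" where
  "hqf M v = Re (\<Sum>i\<in>UNIV. \<Sum>j\<in>UNIV. cnj (v $ i) * complex_of_real (M $ i $ j) * v $ j)"

text \<open>The generalized eigenproblem  calA w = lambda calP w  in block form,
  w = (w1; w2; w3) nonzero.  Equivalently lambda is an eigenvalue of calA calP^{-1}.\<close>
definition gen_eig ::
  "real^'n^'n \<Rightarrow> real^'n^'m \<Rightarrow> real^'m^'p \<Rightarrow> real^'m^'m \<Rightarrow> real^'p^'p \<Rightarrow>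
   real^'n^'n \<Rightarrow> real^'m^'m \<Rightarrow> real^'p^'p \<Rightarrow>
   complex \<Rightarrow> complex^'n \<Rightarrow> complex^'m \<Rightarrow> complex^'p \<Rightarrow> bool" where
  "gen_eig A B C D E Ah Sh Xh lam w1 w2 w3 \<longleftrightarrow>
     (w1 \<noteq> 0 \<or> w2 \<noteq> 0 \<or> w3 \<noteq> 0) \<and>
     cmat A *v w1 + cmat (transpose B) *v w2
        = lam *s (cmat Ah *v w1 + cmat (transpose B) *v w2) \<and>
     cmat B *v w1 - cmat D *v w2 + cmat (transpose C) *v w3
        = lam *s (- (cmat Sh *v w2) + cmat (transpose C) *v w3) \<and>
     cmat C *v w2 + cmat E *v w3 = lam *s (cmat Xh *v w3)"

end

theory Submission
  imports Defs
begin

lemma sym_inner: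
  fixes M :: "real^'n^'n"
  assumes "transpose M = M"
  shows "u \<bullet> (M *v w) = w \<bullet> (M *v u)"
proof -
  have "u \<bullet> (M *v w) = (u v* M) \<bullet> w" by (simp add: dot_lmul_matrix)
  also have "u v* M = transpose M *v u" by simp
  finally show ?thesis using assms by (simp add: inner_commute)
qed

lemma spd_inj:
  fixes M :: "real^'n^'n"
  assumes "spd M" "M *v x = 0" shows "x = 0"
  using assms unfolding spd_def by force

lemma spd_invertible:
  fixes M :: "real^'n^'n"
  assumes "spd M" shows "invertible M"
  using spd_inj[OF assms] by (simp add: invertible_left_inverse matrix_left_invertible_ker)

lemma eig_char:
  fixes M Mh :: "real^'n^'n"
  assumes "spd Mh"
  shows "\<mu> \<in> real_eigs (matrix_inv Mh ** M) \<longleftrightarrow> (\<exists>v. v \<noteq> 0 \<and> M *v v = \<mu> *\<^sub>R (Mh *v v))"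
proof -
  have inv: "invertible Mh" using spd_invertible[OF assms] .
  then have l: "matrix_inv Mh ** Mh = mat 1" and r: "Mh ** matrix_inv Mh = mat 1"
    using someI_ex[OF inv[unfolded invertible_def]] by (simp_all add: matrix_inv_def)
  have "(matrix_inv Mh ** M) *v v = \<mu> *\<^sub>R v \<longleftrightarrow> M *v v = \<mu> *\<^sub>R (Mh *v v)" for v
  proof
    assume "(matrix_inv Mh ** M) *v v = \<mu> *\<^sub>R v"
    then have "Mh *v ((matrix_inv Mh ** M) *v v) = Mh *v (\<mu> *\<^sub>R v)" by simp
    then show "M *v v = \<mu> *\<^sub>R (Mh *v v)"
      by (simp add: matrix_vector_mul_assoc matrix_mul_assoc r matrix_vector_mult_scaleR)
  next
    assume "M *v v = \<mu> *\<^sub>R (Mh *v v)"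
    then have "matrix_inv Mh *v (M *v v) = matrix_inv Mh *v (\<mu> *\<^sub>R (Mh *v v))" by simp
    then show "(matrix_inv Mh ** M) *v v = \<mu> *\<^sub>R v"
      by (simp add: matrix_vector_mul_assoc matrix_mul_assoc l matrix_vector_mult_scaleR)
  qed
  then show ?thesis unfolding real_eigs_def by auto
qed



lemma eig_finite:
  fixes M Mh :: "real^'n^'n"
  assumes Mh: "spd Mh" and M: "transpose M = M"
  shows "finite (real_eigs (matrix_inv Mh ** M))"
proof -
  define S where "S = real_eigs (matrix_inv Mh ** M)"
  define e where "e \<mu> = (SOME v. v \<noteq> 0 \<and> M *v v = \<mu> *\<^sub>R (Mh *v v))" for \<mu>
  have e: "e \<mu> \<noteq> 0 \<and> M *v e \<mu> = \<mu> *\<^sub>R (Mh *v e \<mu>)" if "\<mu> \<in> S" for \<mu>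
    using that unfolding S_def eig_char[OF Mh] e_def by (rule someI_ex)
  have symh: "transpose Mh = Mh" using Mh by (simp add: spd_def)
  have pos: "e \<mu> \<bullet> (Mh *v e \<mu>) > 0" if "\<mu> \<in> S" for \<mu>
    using e[OF that] Mh by (simp add: spd_def)
  have orth: "e \<mu> \<bullet> (Mh *v e \<nu>) = 0" if "\<mu> \<in> S" "\<nu> \<in> S" "\<mu> \<noteq> \<nu>" for \<mu> \<nu>
  proof -
    have "e \<mu> \<bullet> (M *v e \<nu>) = \<nu> * (e \<mu> \<bullet> (Mh *v e \<nu>))" using e[OF that(2)] by simp
    moreover have "e \<nu> \<bullet> (M *v e \<mu>) = \<mu> * (e \<nu> \<bullet> (Mh *v e \<mu>))" using e[OF that(1)] by simp
    moreover have "e \<mu> \<bullet> (M *v e \<nu>) = e \<nu> \<bullet> (M *v e \<mu>)" using sym_inner[OF M] .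
    moreover have "e \<mu> \<bullet> (Mh *v e \<nu>) = e \<nu> \<bullet> (Mh *v e \<mu>)" using sym_inner[OF symh] .
    ultimately have "\<nu> * (e \<mu> \<bullet> (Mh *v e \<nu>)) = \<mu> * (e \<mu> \<bullet> (Mh *v e \<nu>))" by metis
    then have "(\<nu> - \<mu>) * (e \<mu> \<bullet> (Mh *v e \<nu>)) = 0" by (simp add: left_diff_distrib)
    then show ?thesis using that(3) by simp
  qed
  have inj: "inj_on e S"
  proof (rule inj_onI)
    fix \<mu> \<nu> assume h: "\<mu> \<in> S" "\<nu> \<in> S" "e \<mu> = e \<nu>"
    show "\<mu> = \<nu>"
    proof (rule ccontr)
      assume "\<mu> \<noteq> \<nu>"
      then have "e \<mu> \<bullet> (Mh *v e \<mu>) = 0" using orth[OF h(1,2)] h(3) by simp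
      then show False using pos[OF h(1)] by simp
    qed
  qed
  have ind: "independent (e ` S)"
    unfolding real_vector.independent_explicit_finite_subsets
  proof (intro allI impI ballI)
    fix T u w assume T: "T \<subseteq> e ` S" "finite T" and s: "(\<Sum>v\<in>T. u v *\<^sub>R v) = 0" and w: "w \<in> T"
    have "0 = (\<Sum>v\<in>T. u v *\<^sub>R v) \<bullet> (Mh *v w)" using s by simp
    also have "\<dots> = (\<Sum>v\<in>T. u v * (v \<bullet> (Mh *v w)))" by (simp add: inner_sum_left)
    also have "\<dots> = u w * (w \<bullet> (Mh *v w))"
    proof -
      have "(\<Sum>v\<in>T. u v * (v \<bullet> (Mh *v w))) = u w * (w \<bullet> (Mh *v w)) + (\<Sum>v\<in>T-{w}. u v * (v \<bullet> (Mh *v w)))"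
        using T(2) w by (simp add: sum.remove)
      moreover have "(\<Sum>v\<in>T-{w}. u v * (v \<bullet> (Mh *v w))) = 0"
      proof (rule sum.neutral, rule ballI)
        fix v assume v: "v \<in> T - {w}"
        then obtain \<mu> \<nu> where "\<mu> \<in> S" "\<nu> \<in> S" "v = e \<mu>" "w = e \<nu>" using T(1) w by blast
        moreover have "\<mu> \<noteq> \<nu>" using calculation v by auto
        ultimately show "u v * (v \<bullet> (Mh *v w)) = 0" using orth by simp
      qed
      ultimately show ?thesis by simp
    qed
    finally have "u w * (w \<bullet> (Mh *v w)) = 0" by simp
    moreover have "w \<bullet> (Mh *v w) > 0" using T(1) w pos by blast
    ultimately show "u w = 0" by simp
  qed
  then have "finite (e ` S)" by (rule eucl.finiteI_independent)
  then show ?thesis using inj finite_imageD S_def by blast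
qed


lemma psd_kernel:
  fixes N :: "real^'n^'n"
  assumes sym: "transpose N = N" and psd: "\<And>v. v \<bullet> (N *v v) \<ge> 0" and z: "v0 \<bullet> (N *v v0) = 0"
  shows "N *v v0 = 0"
proof (rule ccontr)
  define u where "u = N *v v0"
  assume "N *v v0 \<noteq> 0"
  then have up: "u \<bullet> u > 0" by (simp add: u_def)
  define c where "c = u \<bullet> (N *v u)"
  have c: "c \<ge> 0" using psd c_def by simp
  define t where "t = - (u \<bullet> u) / (c + 1)"
  have "(v0 + t *\<^sub>R u) \<bullet> (N *v (v0 + t *\<^sub>R u)) = v0 \<bullet> (N *v v0) + t * (v0 \<bullet> (N *v u)) + t * (u \<bullet> (N *v v0)) + t * t * c"
    by (simp add: algebra_simps inner_add_left inner_add_right c_def)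
  also have "v0 \<bullet> (N *v u) = u \<bullet> (N *v v0)" using sym_inner[OF sym] .
  also have "u \<bullet> (N *v v0) = u \<bullet> u" by (simp add: u_def)
  finally have eq: "(v0 + t *\<^sub>R u) \<bullet> (N *v (v0 + t *\<^sub>R u)) = 2 * t * (u \<bullet> u) + t * t * c" using z by simp
  have tneg: "t < 0" using up c by (simp add: t_def divide_neg_pos)
  have tc: "t * c = - (u \<bullet> u) * (c / (c + 1))" by (simp add: t_def)
  have "c / (c + 1) \<le> 1" using c by simp
  then have "(u \<bullet> u) * (c / (c + 1)) \<le> (u \<bullet> u)" using up
    by (metis less_eq_real_def mult.right_neutral mult_left_mono)
  then have "2 * (u \<bullet> u) + t * c > 0" using tc up by linarith
  then have "t * (2 * (u \<bullet> u) + t * c) < 0" using tneg by (simp add: mult_neg_pos)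
  then have "2 * t * (u \<bullet> u) + t * t * c < 0" by (simp add: algebra_simps)
  then show False using eq psd[of "v0 + t *\<^sub>R u"] by simp
qed

lemma rayleigh_min:
  fixes M Mh :: "real^'n^'n"
  assumes Mh: "spd Mh" and M: "transpose M = M"
  shows "\<exists>m \<in> real_eigs (matrix_inv Mh ** M). \<forall>v. m * (v \<bullet> (Mh *v v)) \<le> v \<bullet> (M *v v)"
proof -
  define K where "K = sphere (0::real^'n) 1"
  define f where "f v = (v \<bullet> (M *v v)) / (v \<bullet> (Mh *v v))" for v
  have Kpos: "v \<bullet> (Mh *v v) > 0" if "v \<in> K" for v
    using that Mh unfolding K_def spd_def by (metis mem_sphere_0 norm_zero zero_neq_one)
  have cont: "continuous_on K f" unfolding f_def
    by (intro continuous_intros) (use Kpos in force)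
  have cK: "compact K" and neK: "K \<noteq> {}" by (simp_all add: K_def)
  obtain v0 where v0K: "v0 \<in> K" and v0m: "\<forall>y\<in>K. f v0 \<le> f y"
    using continuous_attains_inf[OF cK neK cont] by (elim bexE)
  have v0: "v0 \<in> K" "\<And>y. y \<in> K \<Longrightarrow> f v0 \<le> f y" using v0K v0m by auto
  define m where "m = f v0"
  have bound: "m * (v \<bullet> (Mh *v v)) \<le> v \<bullet> (M *v v)" for v
  proof (cases "v = 0")
    case True then show ?thesis by simp
  next
    case False
    define u where "u = (1 / norm v) *\<^sub>R v"
    have uK: "u \<in> K" using False by (simp add: K_def u_def)
    have vu: "v = norm v *\<^sub>R u" using False by (simp add: u_def)
    have hom: "(s *\<^sub>R w) \<bullet> (Q *v (s *\<^sub>R w)) = s^2 * (w \<bullet> (Q *v w))" for s w and Q :: "real^'n^'n"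
      by (simp add: matrix_vector_mult_scaleR power2_eq_square)
    have q1: "v \<bullet> (M *v v) = (norm v)^2 * (u \<bullet> (M *v u))"
      using hom[of "norm v" u M] vu by simp
    have q2: "v \<bullet> (Mh *v v) = (norm v)^2 * (u \<bullet> (Mh *v u))"
      using hom[of "norm v" u Mh] vu by simp
    have "m \<le> f u" using v0(2)[OF uK] by (simp add: m_def)
    then have "m * (u \<bullet> (Mh *v u)) \<le> u \<bullet> (M *v u)"
      using Kpos[OF uK] by (simp add: f_def pos_le_divide_eq)
    then show ?thesis unfolding q1 q2
      by (metis mult.left_commute mult_left_mono zero_le_power2)
  qed
  define N where "N = M - m *\<^sub>R Mh"
  have Nv: "N *v v = M *v v - m *\<^sub>R (Mh *v v)" for v
    by (simp add: N_def matrix_vector_mult_diff_rdistrib matrix_vector_mult_scaleR scaleR_matrix_vector_assoc)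
  have symh: "transpose Mh = Mh" using Mh by (simp add: spd_def)
  have Mij: "M$i$j = M$j$i" for i j using arg_cong[OF M, of "\<lambda>X. X$j$i"] by (simp add: transpose_def)
  have Mhij: "Mh$i$j = Mh$j$i" for i j using arg_cong[OF symh, of "\<lambda>X. X$j$i"] by (simp add: transpose_def)
  have Nsym: "transpose N = N" unfolding N_def transpose_def vec_eq_iff
    by (simp add: Mij Mhij)
  have Npsd: "v \<bullet> (N *v v) \<ge> 0" for v using bound[of v] by (simp add: Nv inner_diff_right)
  have "m * (v0 \<bullet> (Mh *v v0)) = v0 \<bullet> (M *v v0)"
    using Kpos[OF v0(1)] by (simp add: m_def f_def)
  then have "v0 \<bullet> (N *v v0) = 0" by (simp add: Nv inner_diff_right)
  then have "N *v v0 = 0" using psd_kernel[OF Nsym Npsd] by blast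
  then have "M *v v0 = m *\<^sub>R (Mh *v v0)" by (simp add: Nv)
  moreover have "v0 \<noteq> 0" using v0(1) by (auto simp: K_def)
  ultimately have "m \<in> real_eigs (matrix_inv Mh ** M)" using eig_char[OF Mh] by blast
  then show ?thesis using bound by blast
qed


lemma gamma_bound:
  fixes M Mh :: "real^'n^'n"
  assumes Mh: "spd Mh" and M: "transpose M = M"
  shows "gamma_min Mh M * (v \<bullet> (Mh *v v)) \<le> v \<bullet> (M *v v)"
proof -
  obtain m where m: "m \<in> real_eigs (matrix_inv Mh ** M)" "\<And>v. m * (v \<bullet> (Mh *v v)) \<le> v \<bullet> (M *v v)"
    using rayleigh_min[OF Mh M] by blast
  have "gamma_min Mh M \<le> m" unfolding gamma_min_def using eig_finite[OF Mh M] m(1) by simp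
  moreover have "v \<bullet> (Mh *v v) \<ge> 0" using Mh unfolding spd_def by (cases "v = 0") (auto intro: less_imp_le)
  ultimately have "gamma_min Mh M * (v \<bullet> (Mh *v v)) \<le> m * (v \<bullet> (Mh *v v))" by (simp add: mult_right_mono)
  then show ?thesis using m(2)[of v] by linarith
qed

lemma gamma_pos:
  fixes M Mh :: "real^'n^'n"
  assumes Mh: "spd Mh" and M: "spd M"
  shows "gamma_min Mh M > 0"
proof -
  have Ms: "transpose M = M" using M by (simp add: spd_def)
  obtain m where m: "m \<in> real_eigs (matrix_inv Mh ** M)"
    using rayleigh_min[OF Mh Ms] by blast
  have "gamma_min Mh M \<in> real_eigs (matrix_inv Mh ** M)" unfolding gamma_min_def
    using eig_finite[OF Mh Ms] m by (intro Min_in) auto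
  then obtain v where v: "v \<noteq> 0" "M *v v = gamma_min Mh M *\<^sub>R (Mh *v v)" using eig_char[OF Mh] by blast
  have "v \<bullet> (M *v v) > 0" "v \<bullet> (Mh *v v) > 0" using v(1) M Mh by (auto simp: spd_def)
  moreover have "v \<bullet> (M *v v) = gamma_min Mh M * (v \<bullet> (Mh *v v))" using v(2) by simp
  ultimately show ?thesis by (metis zero_less_mult_pos2)
qed

definition cdot :: "complex^'n \<Rightarrow> complex^'n \<Rightarrow> complex" where
  "cdot u v = (\<Sum>i\<in>UNIV. cnj (u$i) * v$i)"

definition rvec :: "complex^'n \<Rightarrow> real^'n" where "rvec v = (\<chi> i. Re (v$i))"
definition imv :: "complex^'n \<Rightarrow> real^'n" where "imv v = (\<chi> i. Im (v$i))"

lemma cdot_add: "cdot u (a + b) = cdot u a + cdot u b"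
  by (simp add: cdot_def distrib_left sum.distrib)
lemma cdot_diff: "cdot u (a - b) = cdot u a - cdot u b"
  by (simp add: cdot_def right_diff_distrib sum_subtractf)
lemma cdot_uminus: "cdot u (- a) = - cdot u a"
  by (simp add: cdot_def sum_negf)
lemma cdot_smult: "cdot u (c *s a) = c * cdot u a"
  by (simp add: cdot_def sum_distrib_left mult_ac)

lemma cdot_adj:
  fixes M :: "real^'n^'m"
  shows "cdot u (cmat M *v v) = cnj (cdot v (cmat (transpose M) *v u))"
proof -
  have "cnj (cdot v (cmat (transpose M) *v u)) = (\<Sum>j\<in>UNIV. \<Sum>i\<in>UNIV. cnj (u$i) * complex_of_real (M$i$j) * v$j)"
    unfolding cdot_def cmat_def matrix_vector_mult_def transpose_def
    by (simp add: cnj_sum sum_distrib_left mult_ac)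
  also have "\<dots> = (\<Sum>i\<in>UNIV. \<Sum>j\<in>UNIV. cnj (u$i) * complex_of_real (M$i$j) * v$j)"
    by (rule sum.swap)
  also have "\<dots> = cdot u (cmat M *v v)"
    unfolding cdot_def cmat_def matrix_vector_mult_def
    by (simp add: sum_distrib_left mult_ac)
  finally show ?thesis ..
qed

lemma cdot_hqf:
  fixes M :: "real^'n^'n"
  assumes "transpose M = M"
  shows "cdot v (cmat M *v v) = complex_of_real (hqf M v)"
proof -
  have e: "cdot v (cmat M *v v) = cnj (cdot v (cmat M *v v))" using cdot_adj[of v M v] assms by simp
  have "Re (cdot v (cmat M *v v)) = hqf M v"
    unfolding cdot_def cmat_def matrix_vector_mult_def hqf_def
    by (simp add: sum_distrib_left mult_ac)
  moreover have "Im (cdot v (cmat M *v v)) = - Im (cdot v (cmat M *v v))"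
    using arg_cong[OF e, of Im] by simp
  then have "Im (cdot v (cmat M *v v)) = 0" by simp
  ultimately show ?thesis by (simp add: complex_eq_iff)
qed

lemma Re_cnj_mult: "Re (cnj a * complex_of_real m * b) = m * (Re a * Re b + Im a * Im b)"
  by (simp add: algebra_simps)

lemma hqf_split:
  fixes M :: "real^'n^'n"
  shows "hqf M v = rvec v \<bullet> (M *v rvec v) + imv v \<bullet> (M *v imv v)"
  unfolding hqf_def rvec_def imv_def inner_vec_def matrix_vector_mult_def
  by (simp add: Re_sum Re_cnj_mult sum_distrib_left distrib_left sum.distrib mult_ac)

lemma vec_split: "v \<noteq> 0 \<Longrightarrow> rvec v \<noteq> 0 \<or> imv v \<noteq> 0"
  unfolding rvec_def imv_def by (auto simp: vec_eq_iff complex_eq_iff)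

lemma rvec_cmat: "rvec (cmat M *v v) = M *v rvec v" and imv_cmat: "imv (cmat M *v v) = M *v imv v"
  unfolding rvec_def imv_def cmat_def matrix_vector_mult_def
  by (simp_all add: vec_eq_iff Re_sum Im_sum)

lemma hqf_ge:
  fixes M Mh :: "real^'n^'n"
  assumes Mh: "spd Mh" and M: "transpose M = M"
  shows "gamma_min Mh M * hqf Mh v \<le> hqf M v"
  using gamma_bound[OF Mh M, of "rvec v"] gamma_bound[OF Mh M, of "imv v"]
  by (simp add: hqf_split distrib_left)

lemma hqf_pos:
  fixes M :: "real^'n^'n"
  assumes "spd M" "v \<noteq> 0"
  shows "hqf M v > 0"
proof -
  have a: "w \<bullet> (M *v w) \<ge> 0" for w using assms(1) unfolding spd_def by (cases "w = 0") (auto intro: less_imp_le)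
  show ?thesis using vec_split[OF assms(2)] assms(1) a[of "rvec v"] a[of "imv v"]
    unfolding hqf_split spd_def by (metis add_pos_nonneg add_nonneg_pos)
qed

lemma hqf_nonneg:
  fixes M :: "real^'n^'n"
  assumes "spd M"
  shows "hqf M v \<ge> 0"
  using hqf_pos[OF assms, of v] by (cases "v = 0") (auto simp: hqf_def)

lemma core_alg:
  fixes \<alpha> X \<delta> Y \<epsilon> Z :: real and p q lam :: complex
  assumes e1: "complex_of_real \<alpha> + p = lam * (complex_of_real X + p)"
    and e2: "cnj p - complex_of_real \<delta> + q = lam * (- complex_of_real Y + q)"
    and e3: "cnj q + complex_of_real \<epsilon> = lam * complex_of_real Z"
    and b0: "Im lam \<noteq> 0"
  shows "Y = X + \<delta> + (cmod (lam - 1))^2 * Z"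
    and "\<alpha> - X + (cmod (lam - 1))^2 * (Y - Z + \<epsilon>) = 0"
proof -
  define a b p1 p2 q1 q2 where "a = Re lam" "b = Im lam" "p1 = Re p" "p2 = Im p" "q1 = Re q" "q2 = Im q"
  have R1: "\<alpha> + p1 = a * (X + p1) - b * p2" and I1: "p2 = b * (X + p1) + a * p2"
    using arg_cong[OF e1, of Re] arg_cong[OF e1, of Im] by (simp_all add: a_b_p1_p2_q1_q2_def)
  have R2: "p1 - \<delta> + q1 = a * (q1 - Y) - b * q2" and I2: "- p2 + q2 = b * (q1 - Y) + a * q2"
    using arg_cong[OF e2, of Re] arg_cong[OF e2, of Im] by (simp_all add: a_b_p1_p2_q1_q2_def algebra_simps)
  have R3: "q1 + \<epsilon> = a * Z" and I3: "- q2 = b * Z"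
    using arg_cong[OF e3, of Re] arg_cong[OF e3, of Im] by (simp_all add: a_b_p1_p2_q1_q2_def)
  have r: "(cmod (lam - 1))^2 = (a - 1)^2 + b^2"
    by (simp add: cmod_power2 a_b_p1_p2_q1_q2_def)
  have q1: "q1 = a * Z - \<epsilon>" using R3 by simp
  have q2: "q2 = - (b * Z)" using I3 by simp
  have "p2 = q2 - b * (q1 - Y) - a * q2" using I2 by simp
  then have p2: "p2 = b * (Y + \<epsilon> - Z)" unfolding q1 q2 by (simp add: algebra_simps)
  have "p1 = \<delta> - q1 + a * (q1 - Y) - b * q2" using R2 by simp
  then have p1: "p1 = \<delta> - a*Z + \<epsilon> + a * (a*Z - \<epsilon> - Y) + b*b*Z" unfolding q1 q2 by (simp add: algebra_simps)
  have "b * (X + p1) = b * ((1 - a) * (Y + \<epsilon> - Z))" using I1 unfolding p2 by (simp add: algebra_simps)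
  then have Xp: "X + p1 = (1 - a) * (Y + \<epsilon> - Z)" using b0 by (simp add: a_b_p1_p2_q1_q2_def)
  show "Y = X + \<delta> + (cmod (lam - 1))^2 * Z"
    using Xp unfolding p1 r by (simp add: algebra_simps power2_eq_square)
  have "\<alpha> - X = - (1 - a) * (X + p1) - b * p2" using R1 by (simp add: algebra_simps)
  then show "\<alpha> - X + (cmod (lam - 1))^2 * (Y - Z + \<epsilon>) = 0"
    unfolding Xp p2 r by (simp add: algebra_simps power2_eq_square)
qed

lemma eig_ids:
  fixes A Ah :: "real^'n^'n" and B :: "real^'n^'m" and C :: "real^'m^'p"
    and D Sh :: "real^'m^'m" and E Xh :: "real^'p^'p"
  assumes sA: "transpose A = A" and sAh: "transpose Ah = Ah" and sD: "transpose D = D"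
    and sSh: "transpose Sh = Sh" and sE: "transpose E = E" and sXh: "transpose Xh = Xh"
    and g: "gen_eig A B C D E Ah Sh Xh lam w1 w2 w3" and b0: "Im lam \<noteq> 0"
  shows "hqf Sh w2 = hqf Ah w1 + hqf D w2 + (cmod (lam - 1))^2 * hqf Xh w3"
    and "hqf A w1 - hqf Ah w1 + (cmod (lam - 1))^2 * (hqf Sh w2 - hqf Xh w3 + hqf E w3) = 0"
proof -
  define p where "p = cdot w1 (cmat (transpose B) *v w2)"
  define q where "q = cdot w2 (cmat (transpose C) *v w3)"
  have eq1: "cmat A *v w1 + cmat (transpose B) *v w2 = lam *s (cmat Ah *v w1 + cmat (transpose B) *v w2)"
    and eq2: "cmat B *v w1 - cmat D *v w2 + cmat (transpose C) *v w3 = lam *s (- (cmat Sh *v w2) + cmat (transpose C) *v w3)"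
    and eq3: "cmat C *v w2 + cmat E *v w3 = lam *s (cmat Xh *v w3)"
    using g unfolding gen_eig_def by auto
  have pa: "cdot w2 (cmat B *v w1) = cnj p" unfolding p_def using cdot_adj[of w2 B w1] by simp
  have qa: "cdot w3 (cmat C *v w2) = cnj q" unfolding q_def using cdot_adj[of w3 C w2] by simp
  have e1: "complex_of_real (hqf A w1) + p = lam * (complex_of_real (hqf Ah w1) + p)"
    using arg_cong[OF eq1, of "cdot w1"] unfolding p_def
    by (simp add: cdot_add cdot_smult cdot_hqf[OF sA] cdot_hqf[OF sAh] distrib_left)
  have "cdot w2 (cmat B *v w1) - complex_of_real (hqf D w2) + cdot w2 (cmat (transpose C) *v w3)
      = lam * (- complex_of_real (hqf Sh w2) + cdot w2 (cmat (transpose C) *v w3))"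
    using arg_cong[OF eq2, of "cdot w2"]
    by (simp add: cdot_add cdot_diff cdot_uminus cdot_smult cdot_hqf[OF sD] cdot_hqf[OF sSh] ring_distribs)
  then have e2: "cnj p - complex_of_real (hqf D w2) + q = lam * (- complex_of_real (hqf Sh w2) + q)"
    by (simp only: pa q_def[symmetric])
  have e3: "cnj q + complex_of_real (hqf E w3) = lam * complex_of_real (hqf Xh w3)"
    using arg_cong[OF eq3, of "cdot w3"] unfolding qa[symmetric]
    by (simp add: cdot_add cdot_smult cdot_hqf[OF sE] cdot_hqf[OF sXh])
  show "hqf Sh w2 = hqf Ah w1 + hqf D w2 + (cmod (lam - 1))^2 * hqf Xh w3"
    using core_alg(1)[OF e1 e2 e3 b0] .
  show "hqf A w1 - hqf Ah w1 + (cmod (lam - 1))^2 * (hqf Sh w2 - hqf Xh w3 + hqf E w3) = 0"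
    using core_alg(2)[OF e1 e2 e3 b0] .
qed

lemma hqf_zero: "hqf M 0 = 0" by (simp add: hqf_def)

lemma hqf_zero_iff:
  fixes M :: "real^'n^'n"
  assumes "spd M" shows "hqf M v = 0 \<longleftrightarrow> v = 0"
  by (metis hqf_pos[OF assms] hqf_zero less_irrefl)

theorem theorem1:
  fixes A Ah :: "real^'n^'n" and B :: "real^'n^'m" and C :: "real^'m^'p"
    and D Sh :: "real^'m^'m" and E Xh :: "real^'p^'p"
  assumes dims: "CARD('n) \<ge> CARD('m)" "CARD('n) \<ge> CARD('p)"
    and A_spd: "spd A" and E_spd: "spd E" and D_psd: "spsd D"
    and B_rank: "rank B = CARD('m)"
    and C_rank: "rank C = min CARD('p) CARD('m)"
    and Ah_spd: "spd Ah" and Sh_spd: "spd Sh" and Xh_spd: "spd Xh"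
    and one_in: "gamma_min Ah A \<le> 1" "1 \<le> gamma_max Ah A"
  shows
    "(gamma_min Sh D < 1 \<longrightarrow>
       (\<forall>lam w1 w2 w3. gen_eig A B C D E Ah Sh Xh lam w1 w2 w3 \<and> Im lam \<noteq> 0 \<longrightarrow>
          cmod (lam - 1) \<le> sqrt (1 -
            (gamma_min Ah A * hqf Ah w1 + gamma_min Sh D * hqf Sh w2
               + gamma_min Xh E * hqf Xh w3)
            / (hqf Sh w2 + gamma_min Xh E * hqf Xh w3)))) \<and>
     (gamma_min Sh D \<ge> 1 \<longrightarrow>
       (\<forall>lam w1 w2 w3. gen_eig A B C D E Ah Sh Xh lam w1 w2 w3 \<longrightarrow> Im lam = 0))"
proof -
  have sA: "transpose A = A" using A_spd by (simp add: spd_def)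
  have sAh: "transpose Ah = Ah" using Ah_spd by (simp add: spd_def)
  have sD: "transpose D = D" using D_psd by (simp add: spsd_def)
  have sSh: "transpose Sh = Sh" using Sh_spd by (simp add: spd_def)
  have sE: "transpose E = E" using E_spd by (simp add: spd_def)
  have sXh: "transpose Xh = Xh" using Xh_spd by (simp add: spd_def)
  define gA gD gE where "gA = gamma_min Ah A" "gD = gamma_min Sh D" "gE = gamma_min Xh E"
  have gEpos: "gE > 0" using gamma_pos[OF Xh_spd E_spd] by (simp add: gA_gD_gE_def)
  have common: "hqf Sh w2 = hqf Ah w1 + hqf D w2 + (cmod (lam - 1))^2 * hqf Xh w3
      \<and> hqf A w1 - hqf Ah w1 + (cmod (lam - 1))^2 * (hqf Sh w2 - hqf Xh w3 + hqf E w3) = 0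
      \<and> gA * hqf Ah w1 \<le> hqf A w1 \<and> gD * hqf Sh w2 \<le> hqf D w2 \<and> gE * hqf Xh w3 \<le> hqf E w3
      \<and> hqf Ah w1 \<ge> 0 \<and> hqf Sh w2 \<ge> 0 \<and> hqf Xh w3 \<ge> 0 \<and> (cmod (lam - 1))^2 > 0"
    if g: "gen_eig A B C D E Ah Sh Xh lam w1 w2 w3" and b0: "Im lam \<noteq> 0" for lam w1 w2 w3
  proof -
    have "lam - 1 \<noteq> 0" using b0 by auto
    then have "(cmod (lam - 1))^2 > 0" by simp
    then show ?thesis
      using eig_ids[OF sA sAh sD sSh sE sXh g b0]
        hqf_ge[OF Ah_spd sA, of w1] hqf_ge[OF Sh_spd sD, of w2] hqf_ge[OF Xh_spd sE, of w3]
        hqf_nonneg[OF Ah_spd, of w1] hqf_nonneg[OF Sh_spd, of w2] hqf_nonneg[OF Xh_spd, of w3]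
      unfolding gA_gD_gE_def by auto
  qed
  have part1: "cmod (lam - 1) \<le> sqrt (1 - (gA * hqf Ah w1 + gD * hqf Sh w2 + gE * hqf Xh w3)
            / (hqf Sh w2 + gE * hqf Xh w3))"
    if g: "gen_eig A B C D E Ah Sh Xh lam w1 w2 w3" and b0: "Im lam \<noteq> 0" for lam w1 w2 w3
  proof -
    define X Y Z \<alpha> \<delta> \<epsilon> r where "X = hqf Ah w1" "Y = hqf Sh w2" "Z = hqf Xh w3"
      "\<alpha> = hqf A w1" "\<delta> = hqf D w2" "\<epsilon> = hqf E w3" "r = (cmod (lam - 1))^2"
    note c = common[OF g b0, folded X_Y_Z_\<alpha>_\<delta>_\<epsilon>_r_def]
    have i: "Y = X + \<delta> + r * Z" and ii: "\<alpha> - X + r * (Y - Z + \<epsilon>) = 0"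
      and hA: "gA * X \<le> \<alpha>" and hD: "gD * Y \<le> \<delta>" and hE: "gE * Z \<le> \<epsilon>"
      and X0: "X \<ge> 0" and Y0: "Y \<ge> 0" and Z0: "Z \<ge> 0" and r0: "r > 0"
      using c by auto
    have den: "Y + gE * Z > 0"
    proof (rule ccontr)
      assume "\<not> ?thesis"
      then have "Y = 0" "Z = 0" using Y0 Z0 gEpos
        by (smt (verit) mult_pos_pos mult_nonneg_nonneg)+
      then have w23: "w2 = 0" "w3 = 0"
        using hqf_zero_iff[OF Sh_spd] hqf_zero_iff[OF Xh_spd] X_Y_Z_\<alpha>_\<delta>_\<epsilon>_r_def by auto
      then have "\<delta> = 0" by (simp add: X_Y_Z_\<alpha>_\<delta>_\<epsilon>_r_def hqf_zero)
      then have "X = 0" using i \<open>Y = 0\<close> \<open>Z = 0\<close> by simp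
      then have "w1 = 0" using hqf_zero_iff[OF Ah_spd] X_Y_Z_\<alpha>_\<delta>_\<epsilon>_r_def by auto
      then show False using g w23 unfolding gen_eig_def by auto
    qed
    have "r * (Y + \<epsilon>) = Y - \<delta> - \<alpha>" using i ii by (simp add: algebra_simps)
    moreover have "r * (Y + gE * Z) \<le> r * (Y + \<epsilon>)" using hE r0 by (simp add: mult_left_mono)
    ultimately have "r * (Y + gE * Z) \<le> (1 - gD) * Y - gA * X" using hA hD by (simp add: algebra_simps)
    then have "r \<le> ((1 - gD) * Y - gA * X) / (Y + gE * Z)" using den by (simp add: pos_le_divide_eq)
    also have "\<dots> = 1 - (gA * X + gD * Y + gE * Z) / (Y + gE * Z)" using den
      by (simp add: field_simps)
    finally have "sqrt r \<le> sqrt (1 - (gA * X + gD * Y + gE * Z) / (Y + gE * Z))"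
      by (rule real_sqrt_le_mono)
    moreover have "sqrt r = cmod (lam - 1)" by (simp add: X_Y_Z_\<alpha>_\<delta>_\<epsilon>_r_def)
    ultimately show ?thesis by (simp add: X_Y_Z_\<alpha>_\<delta>_\<epsilon>_r_def)
  qed
  have inj: "inj ((*v) (transpose B))"
    using B_rank full_rank_injective[of "transpose B"] rank_transpose[of B] by simp
  have part2: "Im lam = 0"
    if gD1: "gD \<ge> 1" and g: "gen_eig A B C D E Ah Sh Xh lam w1 w2 w3" for lam w1 w2 w3
  proof (rule ccontr)
    assume b0: "Im lam \<noteq> 0"
    define X Y Z \<alpha> \<delta> \<epsilon> r where "X = hqf Ah w1" "Y = hqf Sh w2" "Z = hqf Xh w3"
      "\<alpha> = hqf A w1" "\<delta> = hqf D w2" "\<epsilon> = hqf E w3" "r = (cmod (lam - 1))^2"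
    note c = common[OF g b0, folded X_Y_Z_\<alpha>_\<delta>_\<epsilon>_r_def]
    have i: "Y = X + \<delta> + r * Z"
      and hD: "gD * Y \<le> \<delta>"
      and X0: "X \<ge> 0" and Y0: "Y \<ge> 0" and Z0: "Z \<ge> 0" and r0: "r > 0"
      using c by auto
    have "Y \<le> gD * Y" using gD1 Y0 by (simp add: mult_right_mono[of 1 gD Y, simplified])
    then have "X + r * Z \<le> 0" using i hD by linarith
    moreover have "r * Z \<ge> 0" using r0 Z0 by simp
    ultimately have "X = 0" "r * Z = 0" using X0 by linarith+
    then have "Z = 0" using r0 by simp
    then have w13: "w1 = 0" "w3 = 0"
      using \<open>X = 0\<close> hqf_zero_iff[OF Ah_spd] hqf_zero_iff[OF Xh_spd] X_Y_Z_\<alpha>_\<delta>_\<epsilon>_r_def by auto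
    define u where "u = cmat (transpose B) *v w2"
    have "u = lam *s u" using g w13 unfolding gen_eig_def u_def by simp
    moreover have "lam \<noteq> 1" using b0 by auto
    ultimately have u0: "u = 0" by (auto simp: vec_eq_iff)
    have r0': "rvec u = 0" "imv u = 0" using u0 by (simp_all add: rvec_def imv_def vec_eq_iff)
    have "transpose B *v rvec w2 = 0" "transpose B *v imv w2 = 0"
      using r0' unfolding u_def rvec_cmat imv_cmat .
    then have "rvec w2 = 0" "imv w2 = 0" using inj
      by (metis injD matrix_vector_mult_0_right)+
    then have "w2 = 0" using vec_split by blast
    then show False using g w13 unfolding gen_eig_def by auto
  qed
  show ?thesis using part1 part2 unfolding gA_gD_gE_def by blast
qed

end
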